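(* Let $k\ge 2$, $N\ge 2$. Then $$\det(\lambda I-\widetilde H)=\frac{1}{k!}\sum_{j=0}^{k-1}|s(k,k-j)|\prod_{\substack{i=0\\ i\ne j}}^{k-1}\bigl(\lambda-N^{k-i}\bigr),$$ equivalently $$\frac{\det(\lambda I-\widetilde H)}{\det(\lambda I-H)}=\sum_{j=0}^{k-1}\frac{|s(k,k-j)|/k!}{\lambda-N^{k-j}}.$$
   Context: $H[c,c'] = \#\{(d_1,\ldots,d_k)\in\{0,\ldots,N-1\}^k : \lfloor (d_1+\cdots+d_k+c)/N\rfloor = c'\}$ for $c,c'\in\{0,\ldots,k-1\}$ (count matrix of the carry chain of $k$-summand base-$N$ addition); $\widetilde H$ is its leading $(k-1)\times(k-1)$ principal submatrix (indices $0,\ldots,k-2$). $|s(k,m)|$ is the unsigned Stirling number of the first kind, the coefficient of $x^m$ in $x(x+1)\cdots(x+k-1)$. *)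

theory Defs
  imports "Jordan_Normal_Form.Char_Poly" "HOL-Combinatorics.Stirling"
begin

(* H[c,c'] = #{(d_1..d_k) in {0..N-1}^k : floor((d_1+...+d_k+c)/N) = c'}.
   Tuples are functions on {..<k} (PiE); for naturals floor(x/N) = x div N. *)
definition carry_count :: "nat \<Rightarrow> nat \<Rightarrow> nat \<Rightarrow> nat \<Rightarrow> nat" where
  "carry_count k N c c' =
     card {d \<in> {..<k} \<rightarrow>\<^sub>E {..<N}. (sum d {..<k} + c) div N = c'}"

definition carry_mat :: "nat \<Rightarrow> nat \<Rightarrow> real mat" where
  "carry_mat k N = mat k k (\<lambda>(c, c'). real (carry_count k N c c'))"

definition carry_mat_trunc :: "nat \<Rightarrow> nat \<Rightarrow> real mat" where
  "carry_mat_trunc k N = mat (k - 1) (k - 1) (\<lambda>(c, c'). real (carry_count k N c c'))"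

end

theory Submission
  imports Defs
begin

lemma cc_sum: "carry_count k N c c' =
  (\<Sum>d\<in>{..<k} \<rightarrow>\<^sub>E {..<N}. if (sum d {..<k} + c) div N = c' then 1 else 0)"
  unfolding carry_count_def
  by (simp add: sum.If_cases finite_PiE Int_def)

lemma cc_one: "carry_count k 1 c c' = (if c = c' then 1 else 0)"
proof -
  have "{..<k} \<rightarrow>\<^sub>E {..<Suc 0} = {\<lambda>i\<in>{..<k}. 0}"
    by (auto simp: PiE_def extensional_def restrict_def fun_eq_iff)
  moreover have "{d \<in> {\<lambda>i\<in>{..<k}. 0}. (sum d {..<k} + c) div 1 = c'} = (if c = c' then {\<lambda>i\<in>{..<k}. 0} else {})"
    by auto
  ultimately show ?thesis unfolding carry_count_def by simp
qed

lemma mult_lt_aux: "(a::nat) < N \<Longrightarrow> b < M \<Longrightarrow> a + N * b < N * M"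
proof -
  assume "a < N" "b < M"
  then have "a + N * b < N + N * b" by simp
  also have "\<dots> = N * Suc b" by simp
  also have "\<dots> \<le> N * M" using \<open>b < M\<close> by (intro mult_le_mono2) simp
  finally show ?thesis .
qed

lemma PiE_split_sum:
  fixes f :: "(nat \<Rightarrow> nat) \<Rightarrow> 'b::comm_monoid_add"
  assumes N: "N > 0" and M: "M > 0"
  shows "(\<Sum>d\<in>{..<k} \<rightarrow>\<^sub>E {..<N*M}. f d) =
    (\<Sum>a\<in>{..<k} \<rightarrow>\<^sub>E {..<N}. \<Sum>b\<in>{..<k} \<rightarrow>\<^sub>E {..<M}. f (\<lambda>i\<in>{..<k}. a i + N * b i))"
proof -
  have "(\<Sum>a\<in>{..<k} \<rightarrow>\<^sub>E {..<N}. \<Sum>b\<in>{..<k} \<rightarrow>\<^sub>E {..<M}. f (\<lambda>i\<in>{..<k}. a i + N * b i))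
     = (\<Sum>(a,b)\<in>({..<k} \<rightarrow>\<^sub>E {..<N}) \<times> ({..<k} \<rightarrow>\<^sub>E {..<M}). f (\<lambda>i\<in>{..<k}. a i + N * b i))"
    by (rule sum.cartesian_product)
  also have "\<dots> = (\<Sum>d\<in>{..<k} \<rightarrow>\<^sub>E {..<N*M}. f d)"
  proof (rule sum.reindex_bij_witness[where i = "\<lambda>d. (\<lambda>i\<in>{..<k}. d i mod N, \<lambda>i\<in>{..<k}. d i div N)"
        and j = "\<lambda>(a,b). (\<lambda>i\<in>{..<k}. a i + N * b i)"])
    fix ab assume "ab \<in> ({..<k} \<rightarrow>\<^sub>E {..<N}) \<times> ({..<k} \<rightarrow>\<^sub>E {..<M})"
    then obtain a b where ab: "ab = (a,b)" "a \<in> {..<k} \<rightarrow>\<^sub>E {..<N}" "b \<in> {..<k} \<rightarrow>\<^sub>E {..<M}" by auto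
    show "(\<lambda>d. (\<lambda>i\<in>{..<k}. d i mod N, \<lambda>i\<in>{..<k}. d i div N)) (case ab of (a, b) \<Rightarrow> \<lambda>i\<in>{..<k}. a i + N * b i) = ab"
      using ab N by (auto simp: fun_eq_iff PiE_def extensional_def Pi_def)
    show "(case ab of (a, b) \<Rightarrow> \<lambda>i\<in>{..<k}. a i + N * b i) \<in> {..<k} \<rightarrow>\<^sub>E {..<N * M}"
      using ab by (auto intro!: mult_lt_aux)
  next
    fix d assume d: "d \<in> {..<k} \<rightarrow>\<^sub>E {..<N * M}"
    show "(case (\<lambda>i\<in>{..<k}. d i mod N, \<lambda>i\<in>{..<k}. d i div N) of (a, b) \<Rightarrow> \<lambda>i\<in>{..<k}. a i + N * b i) = d"
      using d by (auto simp: fun_eq_iff PiE_def extensional_def)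
    show "(\<lambda>i\<in>{..<k}. d i mod N, \<lambda>i\<in>{..<k}. d i div N) \<in> ({..<k} \<rightarrow>\<^sub>E {..<N}) \<times> ({..<k} \<rightarrow>\<^sub>E {..<M})"
    proof -
      have "\<And>x. x < k \<Longrightarrow> d x < M * N" using d by (auto simp: PiE_def Pi_def mult.commute)
      then have "\<And>x. x < k \<Longrightarrow> d x div N < M" by (simp add: less_mult_imp_div_less)
      then show ?thesis using d N by auto
    qed
  qed auto
  finally show ?thesis by simp
qed

lemma PiE_sum_bound:
  fixes d :: "nat \<Rightarrow> nat"
  assumes "d \<in> {..<k} \<rightarrow>\<^sub>E {..<N}"
  shows "sum d {..<k} + k \<le> k * N"
proof -
  have "sum d {..<k} + k = (\<Sum>i<k. d i + 1)" by (induct k) auto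
  also have "\<dots> \<le> (\<Sum>i<k. N)" using assms by (intro sum_mono) (auto simp: PiE_def Pi_def)
  finally show ?thesis by simp
qed

lemma cc_mult:
  assumes N: "N > 0" and M: "M > 0" and c: "c < k"
  shows "(\<Sum>c1<k. carry_count k N c c1 * carry_count k M c1 c'') = carry_count k (N*M) c c''"
proof -
  let ?A = "{..<k} \<rightarrow>\<^sub>E {..<N}" and ?B = "{..<k} \<rightarrow>\<^sub>E {..<M}"
  have lt: "(sum a {..<k} + c) div N < k" if "a \<in> ?A" for a
  proof -
    have "sum a {..<k} + c < k * N" using PiE_sum_bound[OF that] c by linarith
    then show ?thesis by (simp add: less_mult_imp_div_less)
  qed
  have "(\<Sum>c1<k. carry_count k N c c1 * carry_count k M c1 c'')
     = (\<Sum>c1<k. \<Sum>a\<in>?A. \<Sum>b\<in>?B. (if (sum a {..<k} + c) div N = c1 then 1 else 0) *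
            (if (sum b {..<k} + c1) div M = c'' then 1 else 0))"
    by (simp add: cc_sum sum_product)
  also have "\<dots> = (\<Sum>a\<in>?A. \<Sum>b\<in>?B. \<Sum>c1<k. (if (sum a {..<k} + c) div N = c1 then 1 else 0) *
            (if (sum b {..<k} + c1) div M = c'' then 1 else 0))"
    by (simp add: sum.swap[of _ "{..<k}"])
  also have "\<dots> = (\<Sum>a\<in>?A. \<Sum>b\<in>?B. if ((sum a {..<k} + c) div N + sum b {..<k}) div M = c'' then 1 else 0)"
  proof (intro sum.cong refl)
    fix a b assume a: "a \<in> ?A"
    have "(\<Sum>c1<k. (if (sum a {..<k} + c) div N = c1 then 1 else 0) *
            (if (sum b {..<k} + c1) div M = c'' then (1::nat) else 0))
       = (\<Sum>c1\<in>{(sum a {..<k} + c) div N}. (if (sum b {..<k} + c1) div M = c'' then (1::nat) else 0))"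
      using lt[OF a] by (intro sum.mono_neutral_cong_right) auto
    then show "(\<Sum>c1<k. (if (sum a {..<k} + c) div N = c1 then 1 else 0) *
            (if (sum b {..<k} + c1) div M = c'' then (1::nat) else 0))
        = (if ((sum a {..<k} + c) div N + sum b {..<k}) div M = c'' then 1 else 0)"
      by (simp add: add.commute)
  qed
  also have "\<dots> = carry_count k (N*M) c c''"
  proof -
    have "carry_count k (N*M) c c'' = (\<Sum>a\<in>?A. \<Sum>b\<in>?B.
        if (sum (\<lambda>i\<in>{..<k}. a i + N * b i) {..<k} + c) div (N*M) = c'' then 1 else 0)"
      unfolding cc_sum by (rule PiE_split_sum[OF N M])
    also have "\<dots> = (\<Sum>a\<in>?A. \<Sum>b\<in>?B. if ((sum a {..<k} + c) div N + sum b {..<k}) div M = c'' then 1 else 0)"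
    proof (intro sum.cong refl)
      fix a b
      have "sum (\<lambda>i\<in>{..<k}. a i + N * b i) {..<k} + c = (sum a {..<k} + c) + N * sum b {..<k}"
        by (simp add: sum.distrib sum_distrib_left)
      moreover have "((sum a {..<k} + c) + N * sum b {..<k}) div (N*M) = ((sum a {..<k} + c) div N + sum b {..<k}) div M"
        using N by (simp add: div_mult2_eq, simp add: add.commute)
      ultimately show "(if (sum (\<lambda>i\<in>{..<k}. a i + N * b i) {..<k} + c) div (N*M) = c'' then 1 else 0) =
          (if ((sum a {..<k} + c) div N + sum b {..<k}) div M = c'' then (1::nat) else 0)" by (simp only:)
    qed
    finally show ?thesis by simp
  qed
  finally show ?thesis .
qed


lemma PiE_Suc_sum:
  fixes f :: "(nat \<Rightarrow> 'a) \<Rightarrow> 'b::comm_monoid_add"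
  assumes B: "finite B"
  shows "(\<Sum>e\<in>{..<Suc n} \<rightarrow>\<^sub>E B. f e) = (\<Sum>v\<in>B. \<Sum>e\<in>{..<n} \<rightarrow>\<^sub>E B. f (e(n := v)))"
proof -
  have eq: "{..<Suc n} \<rightarrow>\<^sub>E B = (\<lambda>(y, g). g(n := y)) ` (B \<times> ({..<n} \<rightarrow>\<^sub>E B))"
    using PiE_insert_eq[of n "{..<n}" "\<lambda>_. B"] by (simp add: lessThan_Suc)
  have inj: "inj_on (\<lambda>(y, g). g(n := y)) (B \<times> ({..<n} \<rightarrow>\<^sub>E B))"
    using inj_combinator[of n "{..<n}" "\<lambda>_. B"] by simp
  have "(\<Sum>e\<in>{..<Suc n} \<rightarrow>\<^sub>E B. f e) = (\<Sum>x\<in>B \<times> ({..<n} \<rightarrow>\<^sub>E B). f ((\<lambda>(y, g). g(n := y)) x))"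
    unfolding eq by (rule sum.reindex[OF inj, unfolded comp_def])
  also have "\<dots> = (\<Sum>(v,e)\<in>B \<times> ({..<n} \<rightarrow>\<^sub>E B). f (e(n := v)))"
    by (simp add: case_prod_beta)
  also have "\<dots> = (\<Sum>v\<in>B. \<Sum>e\<in>{..<n} \<rightarrow>\<^sub>E B. f (e(n := v)))"
    by (rule sum.cartesian_product[symmetric])
  finally show ?thesis .
qed

lemma hockey: "(\<Sum>v<Suc t. ((t - v + n) choose n)) = ((t + Suc n) choose Suc n)"
proof (induction t)
  case 0
  then show ?case by simp
next
  case (Suc t)
  have "(\<Sum>v<Suc (Suc t). ((Suc t - v + n) choose n)) = ((Suc t + n) choose n) + (\<Sum>v<Suc t. ((t - v + n) choose n))"
    by (subst sum.lessThan_Suc_shift) simp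
  also have "\<dots> = ((Suc t + n) choose n) + ((t + Suc n) choose Suc n)" using Suc.IH by simp
  also have "\<dots> = ((Suc t + Suc n) choose Suc n)" by simp
  finally show ?case .
qed

lemma count_le:
  assumes "t \<le> L"
  shows "card {e \<in> {..<n} \<rightarrow>\<^sub>E {..<Suc L}. sum e {..<n} \<le> t} = (t + n) choose n"
  using assms
proof (induction n arbitrary: t)
  case 0
  then show ?case by simp
next
  case (Suc n)
  have cs: "card {e \<in> {..<m} \<rightarrow>\<^sub>E {..<Suc L}. sum e {..<m} \<le> s} =
      (\<Sum>e\<in>{..<m} \<rightarrow>\<^sub>E {..<Suc L}. if sum e {..<m} \<le> s then 1 else 0)" for m s :: nat
    by (simp add: sum.inter_filter[symmetric] finite_PiE)
  have "card {e \<in> {..<Suc n} \<rightarrow>\<^sub>E {..<Suc L}. sum e {..<Suc n} \<le> t}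
      = (\<Sum>v\<in>{..<Suc L}. \<Sum>e\<in>{..<n} \<rightarrow>\<^sub>E {..<Suc L}. if sum (e(n := v)) {..<Suc n} \<le> t then 1 else 0)"
    unfolding cs by (rule PiE_Suc_sum) simp
  also have "\<dots> = (\<Sum>v\<in>{..<Suc L}. \<Sum>e\<in>{..<n} \<rightarrow>\<^sub>E {..<Suc L}. if sum e {..<n} + v \<le> t then 1 else 0)"
  proof (intro sum.cong refl)
    fix v :: nat and e :: "nat \<Rightarrow> nat"
    have "sum (e(n := v)) {..<Suc n} = sum e {..<n} + v"
      by (simp add: lessThan_Suc sum.insert add.commute)
    then show "(if sum (e(n := v)) {..<Suc n} \<le> t then 1 else 0) = (if sum e {..<n} + v \<le> t then 1 else (0::nat))"
      by simp
  qed
  also have "\<dots> = (\<Sum>v\<in>{..<Suc L}. if v \<le> t then (t - v + n) choose n else 0)"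
  proof (intro sum.cong refl)
    fix v
    show "(\<Sum>e\<in>{..<n} \<rightarrow>\<^sub>E {..<Suc L}. if sum e {..<n} + v \<le> t then 1 else 0) =
          (if v \<le> t then (t - v + n) choose n else 0)"
    proof (cases "v \<le> t")
      case True
      have "(\<Sum>e\<in>{..<n} \<rightarrow>\<^sub>E {..<Suc L}. if sum e {..<n} + v \<le> t then 1 else 0)
          = (\<Sum>e\<in>{..<n} \<rightarrow>\<^sub>E {..<Suc L}. if sum e {..<n} \<le> t - v then 1 else (0::nat))"
      proof (rule sum.cong[OF refl])
        fix e :: "nat \<Rightarrow> nat"
        have "(sum e {..<n} + v \<le> t) = (sum e {..<n} \<le> t - v)" using True by linarith
        then show "(if sum e {..<n} + v \<le> t then 1 else 0) = (if sum e {..<n} \<le> t - v then 1 else (0::nat))"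
          by (simp only:)
      qed
      also have "\<dots> = (t - v + n) choose n"
      proof -
        have "t - v \<le> L" using Suc.prems by simp
        from Suc.IH[OF this, unfolded cs] show ?thesis .
      qed
      finally show ?thesis using True by (simp only: if_P[OF True] if_True)
    next
      case False
      then show ?thesis by (intro trans[OF sum.neutral]) auto
    qed
  qed
  also have "\<dots> = (\<Sum>v\<in>{..<Suc t}. (t - v + n) choose n)"
    using Suc.prems by (intro sum.mono_neutral_cong_right) auto
  also have "\<dots> = ((t + Suc n) choose Suc n)" by (rule hockey)
  finally show ?case .
qed

lemma cc_last:
  assumes "M > 0" "k > 0"
  shows "carry_count k M (k - 1) (k - 1) = (M + k - 1) choose k"
proof -
  obtain L where L: "M = Suc L" using assms by (cases M) auto
  obtain K where K: "k = Suc K" using assms by (cases k) auto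
  let ?P = "{..<Suc K} \<rightarrow>\<^sub>E {..<Suc L}"
  have "{d \<in> ?P. (sum d {..<Suc K} + K) div Suc L = K} = {d \<in> ?P. K * L \<le> sum d {..<Suc K}}"
  proof (rule Collect_cong, rule conj_cong[OF refl])
    fix d assume d: "d \<in> ?P"
    have b: "sum d {..<Suc K} + Suc K \<le> Suc K * Suc L" using PiE_sum_bound[OF d] .
    have "(sum d {..<Suc K} + K) div Suc L = K \<longleftrightarrow>
         K \<le> (sum d {..<Suc K} + K) div Suc L \<and> (sum d {..<Suc K} + K) div Suc L < Suc K" by auto
    also have "\<dots> \<longleftrightarrow> K * Suc L \<le> sum d {..<Suc K} + K \<and> sum d {..<Suc K} + K < Suc K * Suc L"
      by (simp only: less_eq_div_iff_mult_less_eq div_less_iff_less_mult zero_less_Suc)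
    also have "\<dots> \<longleftrightarrow> K * L \<le> sum d {..<Suc K}"
      using b by (simp add: algebra_simps)
    finally show "((sum d {..<Suc K} + K) div Suc L = K) = (K * L \<le> sum d {..<Suc K})" .
  qed
  then have "carry_count k M (k - 1) (k - 1) = card {d \<in> ?P. K * L \<le> sum d {..<Suc K}}"
    unfolding carry_count_def K L by simp
  also have "\<dots> = card {e \<in> ?P. sum e {..<Suc K} \<le> L}"
  proof (rule bij_betw_same_card[where f = "\<lambda>d. \<lambda>i\<in>{..<Suc K}. L - d i"], rule bij_betw_byWitness[where f' = "\<lambda>d. \<lambda>i\<in>{..<Suc K}. L - d i"])
    have key: "sum (\<lambda>i\<in>{..<Suc K}. L - d i) {..<Suc K} + sum d {..<Suc K} = Suc K * L" if "d \<in> ?P" for d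
    proof -
      have "sum (\<lambda>i\<in>{..<Suc K}. L - d i) {..<Suc K} + sum d {..<Suc K} = (\<Sum>i<Suc K. L - d i + d i)"
        by (simp add: sum.distrib)
      also have "\<dots> = (\<Sum>i<Suc K. L)" using that by (intro sum.cong refl) (auto simp: PiE_def Pi_def)
      finally show ?thesis by simp
    qed
    show "\<forall>a\<in>{d \<in> ?P. K * L \<le> sum d {..<Suc K}}. (\<lambda>i\<in>{..<Suc K}. L - (\<lambda>i\<in>{..<Suc K}. L - a i) i) = a"
      by (auto simp: fun_eq_iff PiE_def Pi_def extensional_def)
    show "\<forall>a\<in>{e \<in> ?P. sum e {..<Suc K} \<le> L}. (\<lambda>i\<in>{..<Suc K}. L - (\<lambda>i\<in>{..<Suc K}. L - a i) i) = a"
      by (auto simp: fun_eq_iff PiE_def Pi_def extensional_def)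
    show "(\<lambda>d. \<lambda>i\<in>{..<Suc K}. L - d i) ` {d \<in> ?P. K * L \<le> sum d {..<Suc K}} \<subseteq> {e \<in> ?P. sum e {..<Suc K} \<le> L}"
    proof (rule image_subsetI)
      fix d assume "d \<in> {d \<in> ?P. K * L \<le> sum d {..<Suc K}}"
      then have d: "d \<in> ?P" "K * L \<le> sum d {..<Suc K}" by auto
      have "(\<lambda>i\<in>{..<Suc K}. L - d i) \<in> ?P" by auto
      moreover have "sum (\<lambda>i\<in>{..<Suc K}. L - d i) {..<Suc K} \<le> L" using key[OF d(1)] d(2) by simp
      ultimately show "(\<lambda>i\<in>{..<Suc K}. L - d i) \<in> {e \<in> ?P. sum e {..<Suc K} \<le> L}" by simp
    qed
    show "(\<lambda>d. \<lambda>i\<in>{..<Suc K}. L - d i) ` {e \<in> ?P. sum e {..<Suc K} \<le> L} \<subseteq> {d \<in> ?P. K * L \<le> sum d {..<Suc K}}"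
    proof (rule image_subsetI)
      fix d assume "d \<in> {e \<in> ?P. sum e {..<Suc K} \<le> L}"
      then have d: "d \<in> ?P" "sum d {..<Suc K} \<le> L" by auto
      have "sum (\<lambda>i\<in>{..<Suc K}. L - d i) {..<Suc K} + sum d {..<Suc K} = Suc K * L" by (rule key[OF d(1)])
      then have "K * L \<le> sum (\<lambda>i\<in>{..<Suc K}. L - d i) {..<Suc K}" using d(2)
        by (simp only: mult_Suc)
      moreover have "(\<lambda>i\<in>{..<Suc K}. L - d i) \<in> ?P" by auto
      ultimately show "(\<lambda>i\<in>{..<Suc K}. L - d i) \<in> {d \<in> ?P. K * L \<le> sum d {..<Suc K}}" by simp
    qed
  qed
  also have "\<dots> = (L + Suc K) choose Suc K" by (rule count_le) simp
  finally show ?thesis using K L by simp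
qed


lemma char_poly_matrix_index:
  assumes A: "A \<in> carrier_mat n n" and "i < n" "j < n"
  shows "char_poly_matrix A $$ (i,j) = (if i = j then [:0,1:] else 0) + [:- A $$ (i,j):]"
  using assms unfolding char_poly_matrix_def by auto

lemma adj_rec:
  fixes A :: "'a::field mat"
  assumes A: "A \<in> carrier_mat n n" and i: "i < n" and j: "j < n"
  shows "(if m = 0 then 0 else coeff (adj_mat (char_poly_matrix A) $$ (i,j)) (m - 1))
     - (\<Sum>l<n. A $$ (i,l) * coeff (adj_mat (char_poly_matrix A) $$ (l,j)) m)
     = (if i = j then coeff (char_poly A) m else 0)"
proof -
  let ?P = "char_poly_matrix A" let ?C = "adj_mat ?P"
  have P: "?P \<in> carrier_mat n n" using A by simp
  have C: "?C \<in> carrier_mat n n" using adj_mat(1)[OF P] .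
  have "(?P * ?C) $$ (i,j) = (char_poly A \<cdot>\<^sub>m 1\<^sub>m n) $$ (i,j)"
    using adj_mat(2)[OF P] unfolding char_poly_def by simp
  also have "\<dots> = (if i = j then char_poly A else 0)" using i j by simp
  finally have eq0: "(?P * ?C) $$ (i,j) = (if i = j then char_poly A else 0)" .
  have "(?P * ?C) $$ (i,j) = (\<Sum>l<n. ?P $$ (i,l) * ?C $$ (l,j))"
    using P C i j by (auto simp: scalar_prod_def lessThan_atLeast0 intro!: sum.cong)
  also have "\<dots> = (\<Sum>l<n. (if i = l then pCons 0 (?C $$ (l,j)) else 0) + Polynomial.smult (- A $$ (i,l)) (?C $$ (l,j)))"
    using A i by (intro sum.cong refl) (auto simp: char_poly_matrix_index distrib_right)
  also have "\<dots> = pCons 0 (?C $$ (i,j)) + (\<Sum>l<n. Polynomial.smult (- A $$ (i,l)) (?C $$ (l,j)))"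
    using i by (simp only: sum.distrib) (simp add: sum.delta)
  finally have eq: "pCons 0 (?C $$ (i,j)) + (\<Sum>l<n. Polynomial.smult (- A $$ (i,l)) (?C $$ (l,j)))
      = (if i = j then char_poly A else 0)" using eq0 by simp
  have "(if m = 0 then 0 else coeff (?C $$ (i,j)) (m - 1)) - (\<Sum>l<n. A $$ (i,l) * coeff (?C $$ (l,j)) m)
     = coeff (pCons 0 (?C $$ (i,j)) + (\<Sum>l<n. Polynomial.smult (- A $$ (i,l)) (?C $$ (l,j)))) m"
    by (cases m) (simp_all add: coeff_sum sum_negf)
  also have "\<dots> = coeff (if i = j then char_poly A else 0) m" using eq by (simp only:)
  also have "\<dots> = (if i = j then coeff (char_poly A) m else 0)" by simp
  finally show ?thesis .
qed

lemma adj_formula: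
  fixes A :: "'a::field mat" and pw :: "nat \<Rightarrow> nat \<Rightarrow> nat \<Rightarrow> 'a"
  assumes A: "A \<in> carrier_mat n n"
  and pw0: "\<And>i j. i < n \<Longrightarrow> j < n \<Longrightarrow> pw 0 i j = (if i = j then 1 else 0)"
  and pwS: "\<And>e i j. i < n \<Longrightarrow> j < n \<Longrightarrow> pw (Suc e) i j = (\<Sum>l<n. A $$ (i,l) * pw e l j)"
  and pwadd: "\<And>s t i j. i < n \<Longrightarrow> j < n \<Longrightarrow> pw (s+t) i j = (\<Sum>l<n. pw s i l * pw t l j)"
  obtains M where "M \<ge> n"
    "\<And>m i j. i < n \<Longrightarrow> j < n \<Longrightarrow> coeff (adj_mat (char_poly_matrix A) $$ (i,j)) m
        = (\<Sum>t\<in>{Suc m..M}. coeff (char_poly A) t * pw (t - Suc m) i j)"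
    "\<And>s i j. i < n \<Longrightarrow> j < n \<Longrightarrow> (\<Sum>t\<le>M. coeff (char_poly A) t * pw (s+t) i j) = 0"
proof -
  let ?C = "adj_mat (char_poly_matrix A)"
  define c where "c m i j = coeff (?C $$ (i,j)) m" for m i j
  define q where "q t = coeff (char_poly A) t" for t
  define M where "M = Suc (n + (\<Sum>i<n. \<Sum>j<n. degree (?C $$ (i,j))))"
  have Mn: "M \<ge> n" unfolding M_def by simp
  have R: "(if m = 0 then 0 else c (m - 1) i j) - (\<Sum>l<n. A $$ (i,l) * c m l j) = (if i = j then q m else 0)"
    if "i < n" "j < n" for m i j
    unfolding c_def q_def using adj_rec[OF A that] .
  have big: "c m i j = 0" if "i < n" "j < n" "m \<ge> M" for m i j
  proof -
    have "degree (?C $$ (i,j)) \<le> (\<Sum>j<n. degree (?C $$ (i,j)))"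
      using that by (intro member_le_sum) auto
    also have "\<dots> \<le> (\<Sum>i<n. \<Sum>j<n. degree (?C $$ (i,j)))"
      using that by (intro member_le_sum[where f = "\<lambda>i. \<Sum>j<n. degree (?C $$ (i,j))"]) auto
    finally have "degree (?C $$ (i,j)) < m" using that unfolding M_def by linarith
    then show ?thesis unfolding c_def by (simp add: coeff_eq_0)
  qed
  have down: "\<forall>i<n. \<forall>j<n. c (M - r) i j = (\<Sum>t\<in>{Suc (M - r)..M}. q t * pw (t - Suc (M - r)) i j)"
    if "r \<le> M" for r
    using that
  proof (induction r)
    case 0
    then show ?case using big by simp
  next
    case (Suc r)
    define m where "m = M - Suc r"
    have mr: "M - r = Suc m" using Suc.prems unfolding m_def by simp
    have IH: "\<forall>i<n. \<forall>j<n. c (Suc m) i j = (\<Sum>t\<in>{Suc (Suc m)..M}. q t * pw (t - Suc (Suc m)) i j)"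
      using Suc.IH Suc.prems mr by simp
    show ?case unfolding m_def[symmetric]
    proof (intro allI impI)
      fix i j assume i: "i < n" and j: "j < n"
      have "c m i j = (if i = j then q (Suc m) else 0) + (\<Sum>l<n. A $$ (i,l) * c (Suc m) l j)"
        using R[OF i j, of "Suc m"] by (simp add: algebra_simps)
      also have "\<dots> = q (Suc m) * pw 0 i j +
          (\<Sum>l<n. A $$ (i,l) * (\<Sum>t\<in>{Suc (Suc m)..M}. q t * pw (t - Suc (Suc m)) l j))"
        using IH i j pw0[OF i j] by simp
      also have "(\<Sum>l<n. A $$ (i,l) * (\<Sum>t\<in>{Suc (Suc m)..M}. q t * pw (t - Suc (Suc m)) l j))
          = (\<Sum>t\<in>{Suc (Suc m)..M}. q t * (\<Sum>l<n. A $$ (i,l) * pw (t - Suc (Suc m)) l j))"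
        by (simp add: sum_distrib_left sum_distrib_right sum.swap[of _ "{..<n}"] algebra_simps)
      also have "\<dots> = (\<Sum>t\<in>{Suc (Suc m)..M}. q t * pw (t - Suc m) i j)"
      proof (intro sum.cong refl)
        fix t assume "t \<in> {Suc (Suc m)..M}"
        then have "t - Suc m = Suc (t - Suc (Suc m))" by auto
        then show "q t * (\<Sum>l<n. A $$ (i,l) * pw (t - Suc (Suc m)) l j) = q t * pw (t - Suc m) i j"
          using pwS[OF i j] by simp
      qed
      also have "q (Suc m) * pw 0 i j + (\<Sum>t\<in>{Suc (Suc m)..M}. q t * pw (t - Suc m) i j)
          = (\<Sum>t\<in>{Suc m..M}. q t * pw (t - Suc m) i j)"
      proof -
        have "Suc m \<le> M" using Suc.prems unfolding m_def by simp
        then have "{Suc m..M} = insert (Suc m) {Suc (Suc m)..M}" by auto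
        then show ?thesis by simp
      qed
      finally show "c m i j = (\<Sum>t\<in>{Suc m..M}. q t * pw (t - Suc m) i j)" .
    qed
  qed
  have formula: "c m i j = (\<Sum>t\<in>{Suc m..M}. q t * pw (t - Suc m) i j)" if "i < n" "j < n" for m i j
  proof (cases "m \<le> M")
    case True
    then show ?thesis using down[of "M - m"] that by simp
  next
    case False
    then show ?thesis using big[OF that, of m] by simp
  qed
  have CH0: "(\<Sum>t\<le>M. q t * pw t i j) = 0" if i: "i < n" and j: "j < n" for i j
  proof -
    have "0 - (\<Sum>l<n. A $$ (i,l) * c 0 l j) = (if i = j then q 0 else 0)"
      using R[OF i j, of 0] by simp
    also have "(\<Sum>l<n. A $$ (i,l) * c 0 l j) = (\<Sum>l<n. A $$ (i,l) * (\<Sum>t\<in>{Suc 0..M}. q t * pw (t - Suc 0) l j))"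
      using formula j by simp
    also have "\<dots> = (\<Sum>t\<in>{Suc 0..M}. q t * (\<Sum>l<n. A $$ (i,l) * pw (t - Suc 0) l j))"
      by (simp add: sum_distrib_left sum_distrib_right sum.swap[of _ "{..<n}"] algebra_simps)
    also have "\<dots> = (\<Sum>t\<in>{Suc 0..M}. q t * pw t i j)"
    proof (intro sum.cong refl)
      fix t assume "t \<in> {Suc 0..M}"
      then have "t = Suc (t - Suc 0)" by auto
      then show "q t * (\<Sum>l<n. A $$ (i,l) * pw (t - Suc 0) l j) = q t * pw t i j"
        using pwS[OF i j, of "t - Suc 0"] by simp
    qed
    finally have fin: "0 - (\<Sum>t\<in>{Suc 0..M}. q t * pw t i j) = (if i = j then q 0 else 0)" .
    have "(\<Sum>t\<in>{Suc 0..M}. q t * pw t i j) + q 0 * pw 0 i j = 0"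
    proof (cases "i = j")
      case True
      then have "q 0 = - (\<Sum>t\<in>{Suc 0..M}. q t * pw t i j)" using fin by simp
      then show ?thesis using pw0[OF i j] True by simp
    next
      case False
      then show ?thesis using fin pw0[OF i j] by simp
    qed
    moreover have "{..M} = insert 0 {Suc 0..M}" by auto
    ultimately show ?thesis by (simp add: add.commute)
  qed
  have CH: "(\<Sum>t\<le>M. q t * pw (s+t) i j) = 0" if i: "i < n" and j: "j < n" for s i j
  proof -
    have "(\<Sum>t\<le>M. q t * pw (s+t) i j) = (\<Sum>t\<le>M. q t * (\<Sum>l<n. pw s i l * pw t l j))"
      using pwadd[OF i j] by simp
    also have "\<dots> = (\<Sum>l<n. pw s i l * (\<Sum>t\<le>M. q t * pw t l j))"
      by (simp add: sum_distrib_left sum_distrib_right sum.swap[of _ "{..M}"] algebra_simps)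
    also have "\<dots> = 0" using CH0 j by simp
    finally show ?thesis .
  qed
  show ?thesis
    by (rule that[OF Mn]) (use formula CH in \<open>auto simp: c_def q_def\<close>)
qed


lemma poly_upto:
  fixes p :: "'a::comm_ring_1 poly"
  assumes "degree p \<le> M"
  shows "poly p x = (\<Sum>t\<le>M. coeff p t * x ^ t)"
  unfolding poly_altdef
  by (rule sum.mono_neutral_right[symmetric]) (use assms in \<open>auto simp: coeff_eq_0\<close>)

lemma telescope:
  fixes R :: "'a::comm_ring_1 poly"
  assumes "m \<le> M"
  shows "(\<Sum>t\<in>{Suc m..M}. coeff ([:-c,1:] * R) t * c ^ (t - Suc m)) = coeff R m - coeff R M * c ^ (M - m)"
  using assms
proof (induction M rule: dec_induct)
  case base
  then show ?case by simp
next
  case (step M)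
  have cf: "coeff ([:-c,1:] * R) (Suc M) = coeff R M - c * coeff R (Suc M)"
    by (simp add: mult_pCons_left)
  have e1: "Suc M - Suc m = M - m" by simp
  have e2: "Suc M - m = Suc (M - m)" using step.hyps by simp
  have "(\<Sum>t\<in>{Suc m..Suc M}. coeff ([:-c,1:] * R) t * c ^ (t - Suc m))
     = coeff ([:-c,1:] * R) (Suc M) * c ^ (M - m) + (\<Sum>t\<in>{Suc m..M}. coeff ([:-c,1:] * R) t * c ^ (t - Suc m))"
    using step.hyps by (simp add: atLeastAtMostSuc_conv e1)
  also have "\<dots> = (coeff R M - c * coeff R (Suc M)) * c ^ (M - m) + (coeff R m - coeff R M * c ^ (M - m))"
    using step.IH cf by simp
  also have "\<dots> = coeff R m - coeff R (Suc M) * c ^ (Suc M - m)"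
    unfolding e2 by (simp add: algebra_simps)
  finally show ?case .
qed

lemma roots_from_moments:
  fixes w \<mu> Q :: "nat \<Rightarrow> real"
  assumes mom: "\<And>s. (\<Sum>j<k. w j * \<mu> j ^ s * Q j) = 0"
    and inj: "inj_on \<mu> {..<k}" and jz: "jz < k" and w0: "w jz \<noteq> 0"
  shows "Q jz = 0"
proof -
  define r where "r = (\<Prod>i\<in>{..<k} - {jz}. [:- \<mu> i, 1:])"
  have pr: "poly r x = (\<Prod>i\<in>{..<k} - {jz}. x - \<mu> i)" for x
    unfolding r_def poly_prod by simp
  have "(\<Sum>j<k. w j * poly r (\<mu> j) * Q j) = (\<Sum>j<k. w j * (\<Sum>s\<le>degree r. coeff r s * \<mu> j ^ s) * Q j)"
    by (simp add: poly_altdef)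
  also have "\<dots> = (\<Sum>s\<le>degree r. coeff r s * (\<Sum>j<k. w j * \<mu> j ^ s * Q j))"
    by (simp add: sum_distrib_left sum_distrib_right sum.swap[of _ "{..<k}"] algebra_simps)
  also have "\<dots> = 0" using mom by simp
  finally have S0: "(\<Sum>j<k. w j * poly r (\<mu> j) * Q j) = 0" .
  have "(\<Sum>j<k. w j * poly r (\<mu> j) * Q j) = w jz * poly r (\<mu> jz) * Q jz +
      (\<Sum>j\<in>{..<k} - {jz}. w j * poly r (\<mu> j) * Q j)"
    by (rule sum.remove) (use jz in auto)
  also have "(\<Sum>j\<in>{..<k} - {jz}. w j * poly r (\<mu> j) * Q j) = 0"
  proof (rule sum.neutral, rule ballI)
    fix j assume j: "j \<in> {..<k} - {jz}"
    have "poly r (\<mu> j) = 0" unfolding pr using j by (subst prod_zero_iff) auto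
    then show "w j * poly r (\<mu> j) * Q j = 0" by simp
  qed
  finally have "w jz * poly r (\<mu> jz) * Q jz = 0" using S0 by simp
  moreover have "poly r (\<mu> jz) \<noteq> 0"
  proof
    assume "poly r (\<mu> jz) = 0"
    then obtain i where i: "i \<in> {..<k} - {jz}" "\<mu> jz - \<mu> i = 0"
      unfolding pr by (subst (asm) prod_zero_iff) auto
    then have "\<mu> jz = \<mu> i" by simp
    with inj jz i(1) show False by (auto dest: inj_onD)
  qed
  ultimately show ?thesis using w0 by simp
qed

lemma prod_linear_eq:
  fixes q :: "real poly" and \<mu> :: "nat \<Rightarrow> real"
  assumes "degree q = k" "coeff q k = 1" "\<And>j. j < k \<Longrightarrow> poly q (\<mu> j) = 0" "inj_on \<mu> {..<k}"
  shows "q = (\<Prod>j<k. [:- \<mu> j, 1:])"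
proof -
  let ?P = "(\<Prod>j<k. [:- \<mu> j, 1:])"
  have dP: "degree ?P = k"
    by (subst degree_prod_sum_eq) auto
  have lP: "lead_coeff ?P = 1" by (simp add: lead_coeff_prod)
  show ?thesis
  proof (rule poly_eqI_degree_lead_coeff[where n = k and A = "\<mu> ` {..<k}"])
    show "coeff q k = coeff ?P k" using assms(2) lP dP by simp
    show "k \<le> card (\<mu> ` {..<k})" using assms(4) by (simp add: card_image)
    show "degree q \<le> k" "degree ?P \<le> k" using assms(1) dP by simp_all
    fix z assume "z \<in> \<mu> ` {..<k}"
    then obtain j where j: "j < k" "z = \<mu> j" by auto
    have "poly ?P z = 0" unfolding poly_prod using j by (subst prod_zero_iff) auto
    then show "poly q z = poly ?P z" using assms(3) j by simp
  qed
qed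


lemma stirling_pos: "0 < m \<Longrightarrow> m \<le> n \<Longrightarrow> stirling n m > 0"
proof (induction n arbitrary: m)
  case 0
  then show ?case by simp
next
  case (Suc n)
  obtain m' where m: "m = Suc m'" using Suc.prems by (cases m) auto
  show ?case
  proof (cases "m' = 0")
    case True
    show ?thesis unfolding m True stirling_Suc_n_1 by simp
  next
    case False
    then have "stirling n m' > 0" using Suc.IH Suc.prems m by simp
    then show ?thesis using m by simp
  qed
qed

lemma sum_atMost_rev_shift:
  fixes f :: "nat \<Rightarrow> 'a::comm_monoid_add"
  assumes "f 0 = 0"
  shows "(\<Sum>i\<le>k. f i) = (\<Sum>j<k. f (k - j))"
proof -
  have "(\<Sum>i\<le>k. f i) = (\<Sum>i<Suc k. f i)" by (simp add: lessThan_Suc_atMost)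
  also have "\<dots> = (\<Sum>i<Suc k. f (Suc k - Suc i))" by (rule sum.nat_diff_reindex[symmetric])
  also have "\<dots> = (\<Sum>i<Suc k. f (k - i))" by simp
  also have "\<dots> = (\<Sum>j<k. f (k - j))" using assms by simp
  finally show ?thesis .
qed

lemma cc_last_real:
  assumes M: "M > 0" and k: "k > 0"
  shows "real (carry_count k M (k - 1) (k - 1)) =
    (\<Sum>j<k. real (stirling k (k - j)) / fact k * real M ^ (k - j))"
proof -
  have "real (carry_count k M (k - 1) (k - 1)) = real ((M + k - 1) choose k)"
    using cc_last[OF M k] by simp
  also have "\<dots> = (real (M + k - 1) gchoose k)" by (rule binomial_gbinomial)
  also have "\<dots> = pochhammer (real (M + k - 1) - real k + 1) k / fact k"
    by (rule gbinomial_pochhammer')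
  also have "real (M + k - 1) - real k + 1 = real M" using M k by (simp add: of_nat_diff)
  also have "pochhammer (real M) k = (\<Sum>i\<le>k. real (stirling k i) * real M ^ i)"
    by (rule stirling_pochhammer[symmetric])
  also have "\<dots> = (\<Sum>j<k. real (stirling k (k - j)) * real M ^ (k - j))"
    by (rule sum_atMost_rev_shift) (use k in simp)
  finally show ?thesis by (simp add: sum_divide_distrib)
qed

lemma carry_mat_carrier: "carry_mat k N \<in> carrier_mat k k"
  unfolding carry_mat_def by simp

lemma carry_mat_index: "i < k \<Longrightarrow> j < k \<Longrightarrow> carry_mat k N $$ (i,j) = real (carry_count k N i j)"
  unfolding carry_mat_def by simp

lemma trunc_delete:
  assumes k: "k \<ge> 1"
  shows "mat_delete (char_poly_matrix (carry_mat k N)) (k - 1) (k - 1) = char_poly_matrix (carry_mat_trunc k N)"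
proof -
  have T: "carry_mat_trunc k N \<in> carrier_mat (k - 1) (k - 1)" unfolding carry_mat_trunc_def by simp
  have P: "char_poly_matrix (carry_mat k N) \<in> carrier_mat k k" using carry_mat_carrier by simp
  show ?thesis
  proof (rule eq_matI)
    show "dim_row (mat_delete (char_poly_matrix (carry_mat k N)) (k - 1) (k - 1)) = dim_row (char_poly_matrix (carry_mat_trunc k N))"
      by (simp add: char_poly_matrix_def carry_mat_trunc_def carry_mat_def)
    show "dim_col (mat_delete (char_poly_matrix (carry_mat k N)) (k - 1) (k - 1)) = dim_col (char_poly_matrix (carry_mat_trunc k N))"
      by (simp add: char_poly_matrix_def carry_mat_trunc_def carry_mat_def)
    fix i j assume i: "i < dim_row (char_poly_matrix (carry_mat_trunc k N))" and j: "j < dim_col (char_poly_matrix (carry_mat_trunc k N))"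
    then have i': "i < k - 1" and j': "j < k - 1" by (simp_all add: char_poly_matrix_def carry_mat_trunc_def)
    have "mat_delete (char_poly_matrix (carry_mat k N)) (k - 1) (k - 1) $$ (i, j) = char_poly_matrix (carry_mat k N) $$ (i, j)"
      unfolding mat_delete_def using i' j' P by auto
    also have "\<dots> = (if i = j then [:0,1:] else 0) + [:- carry_mat k N $$ (i,j):]"
      using i' j' by (intro char_poly_matrix_index[OF carry_mat_carrier]) auto
    also have "carry_mat k N $$ (i,j) = carry_mat_trunc k N $$ (i,j)"
      using i' j' unfolding carry_mat_def carry_mat_trunc_def by auto
    also have "(if i = j then [:0,1:] else 0) + [:- carry_mat_trunc k N $$ (i,j):] = char_poly_matrix (carry_mat_trunc k N) $$ (i, j)"
      using i' j' by (intro char_poly_matrix_index[OF T, symmetric])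
    finally show "mat_delete (char_poly_matrix (carry_mat k N)) (k - 1) (k - 1) $$ (i, j) = char_poly_matrix (carry_mat_trunc k N) $$ (i, j)" .
  qed
qed

lemma trunc_adj:
  assumes k: "k \<ge> 1"
  shows "char_poly (carry_mat_trunc k N) = adj_mat (char_poly_matrix (carry_mat k N)) $$ (k - 1, k - 1)"
proof -
  have P: "char_poly_matrix (carry_mat k N) \<in> carrier_mat k k" using carry_mat_carrier by simp
  have "adj_mat (char_poly_matrix (carry_mat k N)) $$ (k - 1, k - 1) = cofactor (char_poly_matrix (carry_mat k N)) (k - 1) (k - 1)"
    unfolding adj_mat_def using P k by auto
  also have "\<dots> = det (mat_delete (char_poly_matrix (carry_mat k N)) (k - 1) (k - 1))"
  proof -
    have "k - 1 + (k - 1) = 2 * (k - 1)" by simp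
    then have "(-1 :: real poly) ^ (k - 1 + (k - 1)) = 1" by (simp add: power_mult)
    then show ?thesis unfolding cofactor_def by simp
  qed
  also have "\<dots> = char_poly (carry_mat_trunc k N)" unfolding trunc_delete[OF k] char_poly_def ..
  finally show ?thesis by simp
qed


theorem mainTheorem10:
  fixes k N :: nat
  assumes "k \<ge> 2" and "N \<ge> 2"
  shows "char_poly (carry_mat_trunc k N) =
    Polynomial.smult (1 / fact k)
      (\<Sum>j<k. Polynomial.smult (real (stirling k (k - j)))
          (\<Prod>i\<in>{..<k} - {j}. [: - (real N ^ (k - i)), 1 :]))"
proof -
  have k1: "k \<ge> 1" and k0: "k > 0" and N0: "N > 0" using assms by auto
  define A where "A = carry_mat k N"
  have A: "A \<in> carrier_mat k k" unfolding A_def by (rule carry_mat_carrier)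
  have Aij: "A $$ (i,j) = real (carry_count k N i j)" if "i < k" "j < k" for i j
    unfolding A_def using that by (rule carry_mat_index)
  define pw where "pw e i j = real (carry_count k (N ^ e) i j)" for e i j
  have pw0: "pw 0 i j = (if i = j then 1 else 0)" if "i < k" "j < k" for i j
    unfolding pw_def power_0 cc_one by simp
  have pwS: "pw (Suc e) i j = (\<Sum>l<k. A $$ (i,l) * pw e l j)" if i: "i < k" and j: "j < k" for e i j
  proof -
    have "carry_count k (N ^ Suc e) i j = (\<Sum>l<k. carry_count k N i l * carry_count k (N ^ e) l j)"
      using cc_mult[OF N0 _ i, of "N ^ e" j] N0 by simp
    then show ?thesis unfolding pw_def using Aij[OF i] by (simp add: of_nat_sum)
  qed
  have pwadd: "pw (s + t) i j = (\<Sum>l<k. pw s i l * pw t l j)" if i: "i < k" and j: "j < k" for s t i j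
  proof -
    have "carry_count k (N ^ (s + t)) i j = (\<Sum>l<k. carry_count k (N ^ s) i l * carry_count k (N ^ t) l j)"
      using cc_mult[of "N ^ s" "N ^ t" i k j] N0 i by (simp add: power_add)
    then show ?thesis unfolding pw_def by (simp add: of_nat_sum)
  qed
  obtain M where Mk: "M \<ge> k"
    and form: "\<And>m i j. i < k \<Longrightarrow> j < k \<Longrightarrow> coeff (adj_mat (char_poly_matrix A) $$ (i,j)) m
        = (\<Sum>t\<in>{Suc m..M}. coeff (char_poly A) t * pw (t - Suc m) i j)"
    and CH: "\<And>s i j. i < k \<Longrightarrow> j < k \<Longrightarrow> (\<Sum>t\<le>M. coeff (char_poly A) t * pw (s+t) i j) = 0"
    by (rule adj_formula[OF A pw0 pwS pwadd]) auto
  define q where "q = char_poly A"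
  define \<mu> where "\<mu> j = real N ^ (k - j)" for j
  define w where "w j = real (stirling k (k - j)) / fact k" for j
  have kk: "k - 1 < k" using k0 by simp
  have a: "pw e (k - 1) (k - 1) = (\<Sum>j<k. w j * \<mu> j ^ e)" for e
  proof -
    have "pw e (k - 1) (k - 1) = (\<Sum>j<k. real (stirling k (k - j)) / fact k * real (N ^ e) ^ (k - j))"
      unfolding pw_def using cc_last_real[of "N ^ e" k] N0 k0 by simp
    also have "\<dots> = (\<Sum>j<k. w j * \<mu> j ^ e)"
      unfolding w_def \<mu>_def by (intro sum.cong refl) (simp add: power_mult[symmetric] mult.commute)
    finally show ?thesis .
  qed
  have inj: "inj_on \<mu> {..<k}"
  proof (rule inj_onI)
    fix i j assume i: "i \<in> {..<k}" and j: "j \<in> {..<k}" and e: "\<mu> i = \<mu> j"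
    have "real N > 1" using assms by simp
    then have "k - i = k - j" using e unfolding \<mu>_def by (simp add: power_inject_exp)
    then show "i = j" using i j by simp
  qed
  have w0: "w j \<noteq> 0" if "j < k" for j
    using stirling_pos[of "k - j" k] that unfolding w_def by simp
  have dq: "degree q = k" and cq: "coeff q k = 1"
    using degree_monic_char_poly[OF A] unfolding q_def by auto
  have roots: "poly q (\<mu> j) = 0" if "j < k" for j
  proof (rule roots_from_moments[where Q = "\<lambda>j. poly q (\<mu> j)" and w = w and \<mu> = \<mu> and k = k and jz = j, OF _ inj that w0[OF that]])
    fix s
    have "0 = (\<Sum>t\<le>M. coeff q t * pw (s + t) (k - 1) (k - 1))" using CH[OF kk kk, of s] unfolding q_def by simp
    also have "\<dots> = (\<Sum>t\<le>M. coeff q t * (\<Sum>j<k. w j * \<mu> j ^ (s + t)))" by (simp only: a)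
    also have "\<dots> = (\<Sum>j<k. w j * \<mu> j ^ s * (\<Sum>t\<le>M. coeff q t * \<mu> j ^ t))"
      by (simp add: sum_distrib_left sum_distrib_right sum.swap[of _ "{..<k}"] power_add algebra_simps)
    also have "\<dots> = (\<Sum>j<k. w j * \<mu> j ^ s * poly q (\<mu> j))"
      using poly_upto[of q M] dq Mk by simp
    finally show "(\<Sum>j<k. w j * \<mu> j ^ s * poly q (\<mu> j)) = 0" by simp
  qed
  have qP: "q = (\<Prod>j<k. [:- \<mu> j, 1:])"
    by (rule prod_linear_eq[OF dq cq roots inj])
  define R where "R j = (\<Prod>i\<in>{..<k} - {j}. [:- \<mu> i, 1:])" for j
  have qR: "q = [:- \<mu> j, 1:] * R j" if "j < k" for j
    unfolding qP R_def using that by (subst prod.remove[of _ j]) auto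
  have degR: "degree (R j) < k" if "j < k" for j
  proof -
    have "degree (R j) \<le> (\<Sum>i\<in>{..<k} - {j}. degree [:- \<mu> i, 1:])"
      unfolding R_def using degree_prod_sum_le[of "{..<k} - {j}" "\<lambda>i. [:- \<mu> i, 1:]"] by (simp add: o_def)
    also have "\<dots> = card ({..<k} - {j})" by simp
    also have "\<dots> < k" using that by simp
    finally show ?thesis .
  qed
  have inner: "(\<Sum>t\<in>{Suc m..M}. coeff q t * \<mu> j ^ (t - Suc m)) = coeff (R j) m" if "j < k" for j m
  proof (cases "m \<le> M")
    case True
    have "(\<Sum>t\<in>{Suc m..M}. coeff q t * \<mu> j ^ (t - Suc m)) = coeff (R j) m - coeff (R j) M * \<mu> j ^ (M - m)"
      unfolding qR[OF that] by (rule telescope[OF True])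
    also have "coeff (R j) M = 0" using degR[OF that] Mk by (intro coeff_eq_0) simp
    finally show ?thesis by simp
  next
    case False
    then have "coeff (R j) m = 0" using degR[OF that] Mk by (intro coeff_eq_0) simp
    then show ?thesis using False by simp
  qed
  have p: "char_poly (carry_mat_trunc k N) = adj_mat (char_poly_matrix A) $$ (k - 1, k - 1)"
    unfolding A_def by (rule trunc_adj[OF k1])
  show ?thesis
  proof (rule poly_eqI)
    fix m
    have "coeff (char_poly (carry_mat_trunc k N)) m = (\<Sum>t\<in>{Suc m..M}. coeff q t * pw (t - Suc m) (k - 1) (k - 1))"
      unfolding p q_def by (rule form[OF kk kk])
    also have "\<dots> = (\<Sum>t\<in>{Suc m..M}. coeff q t * (\<Sum>j<k. w j * \<mu> j ^ (t - Suc m)))" by (simp only: a)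
    also have "\<dots> = (\<Sum>j<k. w j * (\<Sum>t\<in>{Suc m..M}. coeff q t * \<mu> j ^ (t - Suc m)))"
      by (simp add: sum_distrib_left sum_distrib_right sum.swap[of _ "{..<k}"] algebra_simps)
    also have "\<dots> = (\<Sum>j<k. w j * coeff (R j) m)" using inner by simp
    also have "\<dots> = coeff (Polynomial.smult (1 / fact k)
      (\<Sum>j<k. Polynomial.smult (real (stirling k (k - j)))
          (\<Prod>i\<in>{..<k} - {j}. [: - (real N ^ (k - i)), 1 :]))) m"
      unfolding w_def R_def \<mu>_def by (simp add: coeff_sum sum_distrib_left)
    finally show "coeff (char_poly (carry_mat_trunc k N)) m = coeff (Polynomial.smult (1 / fact k)
      (\<Sum>j<k. Polynomial.smult (real (stirling k (k - j)))
          (\<Prod>i\<in>{..<k} - {j}. [: - (real N ^ (k - i)), 1 :]))) m" .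
  qed
qed


end
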